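(* Let $F\in Sh^{s,0}_{\Lambda_L}(X)\cap Mod(X)$ be given by data $(V,\rho,W_s,\rho_s,T_s)_{1\le s\le r}$, and let $V_0\subset V$ be as in the context. Set $\rho_0=\rho|_{V_0}$, $W_{0s}=W_s\cap V_0$ (viewing $W_s\subset V$ via $T_s$), $\rho_{0s}=\rho_s|_{W_{0s}}$ and $T_{0s}=T_s|_{W_{0s}}:W_{0s}\to V_0$. Then these are well-defined data of the same type: $V_0$ is $\pi_L$-invariant, $W_{0s}$ is invariant under the monodromy $\rho_s$, the meridian of $K_s$ acts as the identity on $T_{0s}(W_{0s})$, and $\rho_0(\ell_s)\circ T_{0s}=T_{0s}\circ\rho_{0s}(K_s)$. Hence they define a sheaf $F_0$ (the once stabilized subsheaf), and $F_0$ is a subsheaf of $F$.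
   Context: $X=\mathbb{R}^3$ or $S^3$, $k$ a field, $L=K_1\sqcup\dots\sqcup K_r\subset X$ an oriented link with framing $L'=\ell_1\sqcup\dots\sqcup\ell_r$, $\pi_L=\pi_1(X\setminus L)$. $Sh^{s,0}_{\Lambda_L}(X)\cap Mod(X)$: sheaves of $k$-vector spaces on $X$ with micro-support at infinity in the unit conormal $\Lambda_L$, microlocally simple along $\Lambda_L$ with microlocal Morse cone in degree $0$. Such a sheaf is equivalent to data: a representation $\rho:\pi_L\to GL(V)$ (the local system $F|_{X\setminus L}$); for each $s$ a representation $\rho_s:\mathbb{Z}=\pi_1(K_s)\to GL(W_s)$ (the local system $F|_{K_s}$); and a linear map $T_s:W_s\to V$ (restriction from a stalk on $K_s$ to a nearby stalk in the complement), injective with one-dimensional cokernel, such that (a) $\rho(\ell_s)\circ T_s=T_s\circ\rho_s(K_s)$, where $\ell_s$ is the longitude (framing) loop and $K_s$ the generator, and (b) the meridian $m_s$ of $K_s$ acts as the identity on $\mathrm{im}\,T_s$; conversely such data (satisfying (a),(b)) define a sheaf with micro-support in $\Lambda_L$. $V_0:=\sum_{t}\mathrm{im}(\mathrm{id}_V-\rho(m_t))$, the sum over a generating set of $\pi_L$ consisting of meridians (independent of the choice). *)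

theory Defs
  imports Complex_Main "HOL-Algebra.Generated_Groups"
begin

definition lin_on :: "('k \<Rightarrow> 'w::ab_group_add \<Rightarrow> 'w) \<Rightarrow> ('k \<Rightarrow> 'v \<Rightarrow> 'v) \<Rightarrow> 'w set \<Rightarrow> ('w \<Rightarrow> 'v::ab_group_add) \<Rightarrow> bool"
  where "lin_on sW sV W f \<longleftrightarrow>
     (\<forall>x\<in>W. \<forall>y\<in>W. f (x + y) = f x + f y) \<and> (\<forall>c. \<forall>x\<in>W. f (sW c x) = sV c (f x))"

definition is_meridian :: "('g, 'b) monoid_scheme \<Rightarrow> (nat \<Rightarrow> 'g) \<Rightarrow> nat \<Rightarrow> 'g \<Rightarrow> bool"
  where "is_meridian G m r t \<longleftrightarrow>
     (\<exists>s\<in>{1..r}. \<exists>g\<in>carrier G. t = g \<otimes>\<^bsub>G\<^esub> m s \<otimes>\<^bsub>G\<^esub> inv\<^bsub>G\<^esub> g)"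

text \<open>V is the whole vector space of type 'v (scalar multiplication sV); the W_s are subspaces
  of a common ambient space 'w (scalar multiplication sW); rho_s is the Z-representation
  determined by the automorphism A s = rho_s(K_s); G = pi_L with meridians m s and
  longitudes (framing loops) l s.\<close>
definition link_sheaf_data ::
  "('k::field \<Rightarrow> 'v::ab_group_add \<Rightarrow> 'v) \<Rightarrow> ('k \<Rightarrow> 'w::ab_group_add \<Rightarrow> 'w) \<Rightarrow>
   ('g, 'b) monoid_scheme \<Rightarrow> nat \<Rightarrow> (nat \<Rightarrow> 'g) \<Rightarrow> (nat \<Rightarrow> 'g) \<Rightarrow>
   ('g \<Rightarrow> 'v \<Rightarrow> 'v) \<Rightarrow> (nat \<Rightarrow> 'w set) \<Rightarrow> (nat \<Rightarrow> 'w \<Rightarrow> 'w) \<Rightarrow> (nat \<Rightarrow> 'w \<Rightarrow> 'v) \<Rightarrow> bool"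
  where "link_sheaf_data sV sW G r m l rho W A T \<longleftrightarrow>
     vector_space sV \<and> vector_space sW \<and> group G \<and>
     (\<forall>s\<in>{1..r}. m s \<in> carrier G \<and> l s \<in> carrier G) \<and>
     (\<forall>g\<in>carrier G. Vector_Spaces.linear sV sV (rho g) \<and> bij (rho g)) \<and>
     (\<forall>g\<in>carrier G. \<forall>h\<in>carrier G. rho (g \<otimes>\<^bsub>G\<^esub> h) = rho g \<circ> rho h) \<and>
     rho \<one>\<^bsub>G\<^esub> = id \<and>
     (\<forall>s\<in>{1..r}.
        module.subspace sW (W s) \<and>
        lin_on sW sW (W s) (A s) \<and> bij_betw (A s) (W s) (W s) \<and>
        lin_on sW sV (W s) (T s) \<and> inj_on (T s) (W s) \<and>
        (\<exists>v. v \<notin> T s ` W s \<and> module.span sV (insert v (T s ` W s)) = UNIV) \<and>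
        (\<forall>w\<in>W s. rho (l s) (T s w) = T s (A s w)) \<and>
        (\<forall>w\<in>W s. rho (m s) (T s w) = T s w))"

definition V0 :: "('k::field \<Rightarrow> 'v::ab_group_add \<Rightarrow> 'v) \<Rightarrow> ('g \<Rightarrow> 'v \<Rightarrow> 'v) \<Rightarrow> 'g set \<Rightarrow> 'v set"
  where "V0 sV rho M = module.span sV (\<Union>t\<in>M. range (\<lambda>v. v - rho t v))"

definition W0 :: "(nat \<Rightarrow> 'w set) \<Rightarrow> (nat \<Rightarrow> 'w \<Rightarrow> 'v) \<Rightarrow> 'v set \<Rightarrow> nat \<Rightarrow> 'w set"
  where "W0 W T V0set s = {w \<in> W s. T s w \<in> V0set}"

end

theory Submission
  imports Defs
begin

theorem proposition3p12:
  fixes sV :: "'k::field \<Rightarrow> 'v::ab_group_add \<Rightarrow> 'v" and sW :: "'k \<Rightarrow> 'w::ab_group_add \<Rightarrow> 'w"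
    and G :: "('g, 'b) monoid_scheme" and r :: nat and m l :: "nat \<Rightarrow> 'g"
    and rho :: "'g \<Rightarrow> 'v \<Rightarrow> 'v" and W :: "nat \<Rightarrow> 'w set" and A :: "nat \<Rightarrow> 'w \<Rightarrow> 'w"
    and T :: "nat \<Rightarrow> 'w \<Rightarrow> 'v" and M :: "'g set"
  assumes data: "link_sheaf_data sV sW G r m l rho W A T"
    and M_sub: "M \<subseteq> carrier G"
    and M_gen: "generate G M = carrier G"
    and M_mer: "\<forall>t\<in>M. is_meridian G m r t"
  shows "module.subspace sV (V0 sV rho M)
       \<and> (\<forall>g\<in>carrier G. rho g ` V0 sV rho M \<subseteq> V0 sV rho M)
       \<and> (\<forall>s\<in>{1..r}.
            module.subspace sW (W0 W T (V0 sV rho M) s)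
          \<and> W0 W T (V0 sV rho M) s \<subseteq> W s
          \<and> bij_betw (A s) (W0 W T (V0 sV rho M) s) (W0 W T (V0 sV rho M) s)
          \<and> T s ` W0 W T (V0 sV rho M) s \<subseteq> V0 sV rho M
          \<and> inj_on (T s) (W0 W T (V0 sV rho M) s)
          \<and> (\<forall>w\<in>W0 W T (V0 sV rho M) s. rho (m s) (T s w) = T s w)
          \<and> (\<forall>w\<in>W0 W T (V0 sV rho M) s. rho (l s) (T s w) = T s (A s w)))"
proof -
  have vsV: "vector_space sV" and vsW: "vector_space sW" and grp: "group G"
    and ms: "\<And>s. s\<in>{1..r} \<Longrightarrow> m s \<in> carrier G \<and> l s \<in> carrier G"
    and lin: "\<And>g. g\<in>carrier G \<Longrightarrow> Vector_Spaces.linear sV sV (rho g)"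
    and hom: "\<And>g h. g\<in>carrier G \<Longrightarrow> h\<in>carrier G \<Longrightarrow> rho (g \<otimes>\<^bsub>G\<^esub> h) = rho g \<circ> rho h"
    and one: "rho \<one>\<^bsub>G\<^esub> = id"
    and Wd: "\<And>s. s\<in>{1..r} \<Longrightarrow> module.subspace sW (W s) \<and>
        lin_on sW sW (W s) (A s) \<and> bij_betw (A s) (W s) (W s) \<and>
        lin_on sW sV (W s) (T s) \<and> inj_on (T s) (W s) \<and>
        (\<forall>w\<in>W s. rho (l s) (T s w) = T s (A s w)) \<and>
        (\<forall>w\<in>W s. rho (m s) (T s w) = T s w)"
    using data unfolding link_sheaf_data_def by blast+
  interpret V: vector_space sV by (rule vsV)
  interpret Wm: vector_space sW by (rule vsW)
  interpret G: group G by (rule grp)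
  define V0s where "V0s = V0 sV rho M"
  have V0s: "V0s = V.span (\<Union>t\<in>M. range (\<lambda>v. v - rho t v))"
    unfolding V0s_def V0_def by simp
  have add: "rho g (x + y) = rho g x + rho g y" if g: "g\<in>carrier G" for g x y
  proof -
    have "\<forall>x y. rho g (x + y) = rho g x + rho g y"
      using lin[OF g] unfolding Vector_Spaces.linear_iff by (elim conjE)
    then show ?thesis by blast
  qed
  have diff: "\<And>g x y. g\<in>carrier G \<Longrightarrow> rho g (x - y) = rho g x - rho g y"
  proof -
    fix g x y assume g: "g \<in> carrier G"
    have "rho g (x - y) + rho g y = rho g x" using add[OF g, of "x - y" y] by simp
    then show "rho g (x - y) = rho g x - rho g y" by (simp add: algebra_simps)
  qed
  have sub: "V.subspace V0s" unfolding V0s by simp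
  define H where "H = {g\<in>carrier G. \<forall>v. v - rho g v \<in> V0s}"
  have "generate G M \<subseteq> H"
  proof
    fix g assume "g \<in> generate G M"
    then show "g \<in> H"
    proof (induction rule: generate.induct)
      case one then show ?case unfolding H_def by (simp add: \<open>rho \<one>\<^bsub>G\<^esub> = id\<close> V0s V.span_zero)
    next
      case (incl h) then show ?case unfolding H_def V0s using M_sub
        by (auto intro!: V.span_base)
    next
      case (inv h)
      have h: "h \<in> carrier G" using inv M_sub by auto
      have ih: "\<And>v. v - rho h v \<in> V0s" using inv M_sub unfolding V0s by (auto intro!: V.span_base)
      have hh: "rho h (rho (inv\<^bsub>G\<^esub> h) v) = v" for v
        using hom[of h "inv\<^bsub>G\<^esub> h"] h \<open>rho \<one>\<^bsub>G\<^esub> = id\<close>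
        by (simp add: G.r_inv) (metis comp_apply id_apply)
      have "v - rho (inv\<^bsub>G\<^esub> h) v = - (rho (inv\<^bsub>G\<^esub> h) v - rho h (rho (inv\<^bsub>G\<^esub> h) v))" for v
        using hh[of v] by simp
      moreover have "- (rho (inv\<^bsub>G\<^esub> h) v - rho h (rho (inv\<^bsub>G\<^esub> h) v)) \<in> V0s" for v
        using ih unfolding V0s by (intro V.span_neg) auto
      ultimately show ?case unfolding H_def using h by auto
    next
      case (eng a b)
      have a: "a \<in> carrier G" and b: "b \<in> carrier G" using eng unfolding H_def by auto
      have "v - rho (a \<otimes>\<^bsub>G\<^esub> b) v = (v - rho b v) + (rho b v - rho a (rho b v))" for v
        using hom[OF a b] by simp
      moreover have "(v - rho b v) + (rho b v - rho a (rho b v)) \<in> V0s" for v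
        using eng unfolding H_def V0s by (intro V.span_add) auto
      ultimately show ?case unfolding H_def using a b by auto
    qed
  qed
  then have allg: "\<And>g v. g \<in> carrier G \<Longrightarrow> v - rho g v \<in> V0s" using M_gen unfolding H_def by auto
  have inv0: "\<forall>g\<in>carrier G. rho g ` V0s \<subseteq> V0s"
  proof (intro ballI subsetI)
    fix g x assume g: "g \<in> carrier G" and "x \<in> rho g ` V0s"
    then obtain v where v: "v \<in> V0s" and x: "x = rho g v" by auto
    have "v - (v - rho g v) \<in> V0s" using v allg[OF g, of v] unfolding V0s by (rule V.span_diff)
    then show "x \<in> V0s" using x by simp
  qed
  have part3: "\<forall>s\<in>{1..r}.
            module.subspace sW (W0 W T V0s s)
          \<and> W0 W T V0s s \<subseteq> W s
          \<and> bij_betw (A s) (W0 W T V0s s) (W0 W T V0s s)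
          \<and> T s ` W0 W T V0s s \<subseteq> V0s
          \<and> inj_on (T s) (W0 W T V0s s)
          \<and> (\<forall>w\<in>W0 W T V0s s. rho (m s) (T s w) = T s w)
          \<and> (\<forall>w\<in>W0 W T V0s s. rho (l s) (T s w) = T s (A s w))"
  proof
    fix s assume s: "s \<in> {1..r}"
    note D = Wd[OF s]
    have ml: "m s \<in> carrier G" "l s \<in> carrier G" using ms[OF s] by auto
    have Wsub: "Wm.subspace (W s)" using D by blast
    have Tadd: "\<And>x y. x \<in> W s \<Longrightarrow> y \<in> W s \<Longrightarrow> T s (x + y) = T s x + T s y"
      and Tsc: "\<And>c x. x \<in> W s \<Longrightarrow> T s (sW c x) = sV c (T s x)"
      using D unfolding lin_on_def by blast+
    have W0in: "0 \<in> W s" using Wsub unfolding Wm.subspace_def by blast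
    have T0: "T s 0 = 0" using Tadd[OF W0in W0in] by simp
    have Vsub: "0 \<in> V0s" "\<And>x y. x \<in> V0s \<Longrightarrow> y \<in> V0s \<Longrightarrow> x + y \<in> V0s"
         "\<And>c x. x \<in> V0s \<Longrightarrow> sV c x \<in> V0s"
      using sub unfolding V.subspace_def by blast+
    have s1: "Wm.subspace (W0 W T V0s s)"
      unfolding Wm.subspace_def W0_def
      using Wsub Vsub T0 Tadd Tsc unfolding Wm.subspace_def by auto
    have s2: "W0 W T V0s s \<subseteq> W s" unfolding W0_def by auto
    have bijW: "bij_betw (A s) (W s) (W s)" using D by blast
    have lw: "\<And>w. w \<in> W s \<Longrightarrow> rho (l s) (T s w) = T s (A s w)" using D by blast
    have mw: "\<And>w. w \<in> W s \<Longrightarrow> rho (m s) (T s w) = T s w" using D by blast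
    have injT: "inj_on (T s) (W s)" using D by blast
    have ll: "rho (inv\<^bsub>G\<^esub> (l s)) (rho (l s) v) = v" for v
      using hom[of "inv\<^bsub>G\<^esub> (l s)" "l s"] ml \<open>rho \<one>\<^bsub>G\<^esub> = id\<close>
      by (simp add: G.l_inv) (metis comp_apply id_apply)
    have s3: "bij_betw (A s) (W0 W T V0s s) (W0 W T V0s s)"
    proof -
      have inj: "inj_on (A s) (W0 W T V0s s)"
        using bijW s2 unfolding bij_betw_def by (metis inj_on_subset)
      have "A s ` W0 W T V0s s \<subseteq> W0 W T V0s s"
      proof
        fix x assume "x \<in> A s ` W0 W T V0s s"
        then obtain w where w: "w \<in> W0 W T V0s s" "x = A s w" by auto
        have "w \<in> W s" "T s w \<in> V0s" using w unfolding W0_def by auto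
        then show "x \<in> W0 W T V0s s" unfolding W0_def using w bijW lw inv0 ml
          by (auto simp: bij_betw_def) (metis image_eqI subsetD)
      qed
      moreover have "W0 W T V0s s \<subseteq> A s ` W0 W T V0s s"
      proof
        fix x assume x: "x \<in> W0 W T V0s s"
        then have xW: "x \<in> W s" and xV: "T s x \<in> V0s" unfolding W0_def by auto
        then obtain w where w: "w \<in> W s" "x = A s w" using bijW unfolding bij_betw_def by auto
        have "T s w = rho (inv\<^bsub>G\<^esub> (l s)) (T s x)" using lw[OF w(1)] w(2) ll by metis
        moreover have "inv\<^bsub>G\<^esub> (l s) \<in> carrier G" using ml by simp
        ultimately have "T s w \<in> V0s" using inv0 xV by blast
        then show "x \<in> A s ` W0 W T V0s s" using w unfolding W0_def by auto
      qed
      ultimately show ?thesis using inj unfolding bij_betw_def by auto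
    qed
    show "module.subspace sW (W0 W T V0s s)
          \<and> W0 W T V0s s \<subseteq> W s
          \<and> bij_betw (A s) (W0 W T V0s s) (W0 W T V0s s)
          \<and> T s ` W0 W T V0s s \<subseteq> V0s
          \<and> inj_on (T s) (W0 W T V0s s)
          \<and> (\<forall>w\<in>W0 W T V0s s. rho (m s) (T s w) = T s w)
          \<and> (\<forall>w\<in>W0 W T V0s s. rho (l s) (T s w) = T s (A s w))"
      using s1 s2 s3 injT mw lw by (auto simp: W0_def intro: inj_on_subset)
  qed
  show ?thesis using sub inv0 part3 unfolding V0s_def by blast
qed

end
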